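(* In the multi-hop VAoI network described in the context, for each $i\in\{1,\dots,N\}$ the VAoI at node $i+1$ satisfies \[ \Delta_{i+1}(t)=\Delta_i(t-m_i)+\eta_{m_i}, \] where $m_i$ (the number of slots back to the last successful delivery on link $i$, so that $V_{i+1}(t)=V_i(t-m_i)$) is a geometric random variable with parameter $\rho_i$, $\mathbb{P}(m_i=\ell)=(1-\rho_i)^{\ell-1}\rho_i$ for $\ell=1,2,\dots$, and $\eta_k=V_S(t)-V_S(t-k)$ (the number of source versions generated in the last $k$ slots) is, for given $k$, a binomial random variable with parameters $k$ and $p_g$: $\mathbb{P}(\eta_k=r\mid k)=\binom{k}{r}p_g^r(1-p_g)^{k-r}$, $r=0,\dots,k$.
   Context: Time is slotted. A source generates a new version in each slot independently with probability $p_g$, and its version index $V_S(t)$ increases by one at the start of the slot following each generation. Nodes $0,1,\dots,N+1$ form a line; node $0$ always holds the current source version ($V_0(t)=V_S(t)$), node $N+1$ is the destination, and nodes $1,\dots,N$ are relays. Each node stores only the latest version it has received. Link $i$ (from node $i$ to node $i+1$) delivers a transmission successfully with probability $\rho_i$, independently across slots and links ($\rho_0=p_s$). Node $0$ transmits according to an update policy; each relay node $i\ge1$ transmits its stored version in every slot, so that $V_{i+1}(t+1)=V_i(t)$ if the transmission on link $i$ at slot $t$ succeeds and $V_{i+1}(t+1)=V_{i+1}(t)$ otherwise. The VAoI at node $j$ is $\Delta_j(t)=V_S(t)-V_j(t)$. *)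

theory Defs
  imports "HOL-Probability.Probability"
begin

text \<open>Sample-path model. g t: a new version is generated in slot t.
  sl i t: transmission on link i in slot t would succeed (link i from node i to i+1).
  u t: node 0 (the source side) transmits in slot t (arbitrary update policy).\<close>

definition VS :: "(nat \<Rightarrow> bool) \<Rightarrow> nat \<Rightarrow> nat" where
  "VS g t = card {s. s < t \<and> g s}"

fun Vn :: "(nat \<Rightarrow> bool) \<Rightarrow> (nat \<Rightarrow> nat \<Rightarrow> bool) \<Rightarrow> (nat \<Rightarrow> bool) \<Rightarrow> nat \<Rightarrow> nat \<Rightarrow> nat" where
  "Vn g sl u 0 t = VS g t"
| "Vn g sl u (Suc j) 0 = 0"
| "Vn g sl u (Suc j) (Suc t) =
     (if (j = 0 \<longrightarrow> u t) \<and> sl j t then Vn g sl u j t else Vn g sl u (Suc j) t)"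

definition VAoI :: "(nat \<Rightarrow> bool) \<Rightarrow> (nat \<Rightarrow> nat \<Rightarrow> bool) \<Rightarrow> (nat \<Rightarrow> bool) \<Rightarrow> nat \<Rightarrow> nat \<Rightarrow> int" where
  "VAoI g sl u j t = int (VS g t) - int (Vn g sl u j t)"

definition lastm :: "(nat \<Rightarrow> nat \<Rightarrow> bool) \<Rightarrow> nat \<Rightarrow> nat \<Rightarrow> nat" where
  "lastm sl i t = (LEAST l. 1 \<le> l \<and> l \<le> t \<and> sl i (t - l))"

definition eta :: "(nat \<Rightarrow> bool) \<Rightarrow> nat \<Rightarrow> nat \<Rightarrow> int" where
  "eta g t k = int (VS g t) - int (VS g (t - k))"

end

theory Submission
  imports Defs
begin

lemma (in prob_space) bool_rv_event:
  assumes "indep_vars (\<lambda>_. count_space UNIV) X I" "j \<in> I"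
  shows "{\<omega>\<in>space M. X j \<omega> = b} \<in> events"
proof -
  have "X j \<in> measurable M (count_space UNIV)" using assms unfolding indep_vars_def2 by auto
  then have "X j -` {b} \<inter> space M \<in> events" by (rule measurable_sets) auto
  moreover have "X j -` {b} \<inter> space M = {\<omega>\<in>space M. X j \<omega> = b}" by auto
  ultimately show ?thesis by simp
qed

lemma (in prob_space) pattern_prob:
  assumes ind: "indep_vars (\<lambda>_. count_space UNIV) X I" and fin: "finite J" and JI: "J \<subseteq> I"
  shows "prob {\<omega>\<in>space M. \<forall>j\<in>J. X j \<omega> = f j} = (\<Prod>j\<in>J. prob {\<omega>\<in>space M. X j \<omega> = f j})"
proof (cases "J = {}")
  case True then show ?thesis by (simp add: prob_space)
next
  case False
  have isd: "indep_sets (\<lambda>i. { X i -` A \<inter> space M | A. A \<in> sets (count_space UNIV)}) I"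
    using ind unfolding indep_vars_def2 by auto
  have "prob (\<Inter>j\<in>J. X j -` {f j} \<inter> space M) = (\<Prod>j\<in>J. prob (X j -` {f j} \<inter> space M))"
    by (rule indep_setsD[OF isd JI False fin]) auto
  moreover have "(\<Inter>j\<in>J. X j -` {f j} \<inter> space M) = {\<omega>\<in>space M. \<forall>j\<in>J. X j \<omega> = f j}"
    using False by auto
  moreover have "\<And>j. X j -` {f j} \<inter> space M = {\<omega>\<in>space M. X j \<omega> = f j}" by auto
  ultimately show ?thesis by simp
qed

lemma (in prob_space) count_binomial:
  assumes ind: "indep_vars (\<lambda>_. count_space UNIV) X I"
    and finD: "finite D" and DI: "D \<subseteq> I" and finJ: "finite J" and JI: "J \<subseteq> I"
    and disj: "D \<inter> J = {}"
    and p: "\<And>j. j \<in> D \<Longrightarrow> prob {\<omega>\<in>space M. X j \<omega>} = p"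
  shows "prob {\<omega>\<in>space M. (\<forall>j\<in>J. X j \<omega> = f j) \<and> card {j\<in>D. X j \<omega>} = r}
     = real (card D choose r) * p ^ r * (1 - p) ^ (card D - r) * prob {\<omega>\<in>space M. \<forall>j\<in>J. X j \<omega> = f j}"
proof -
  define SS where "SS = {A. A \<subseteq> D \<and> card A = r}"
  define g where "g A j = (if j \<in> D then j \<in> A else f j)" for A j
  define E where "E A = {\<omega>\<in>space M. \<forall>j\<in>J \<union> D. X j \<omega> = g A j}" for A
  have finSS: "finite SS" unfolding SS_def using finD by auto
  have cardSS: "card SS = card D choose r" unfolding SS_def using n_subsets[OF finD] by simp
  have eq: "{\<omega>\<in>space M. (\<forall>j\<in>J. X j \<omega> = f j) \<and> card {j\<in>D. X j \<omega>} = r} = (\<Union>A\<in>SS. E A)"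
  proof (rule set_eqI, rule iffI)
    fix \<omega> assume h: "\<omega> \<in> {\<omega>\<in>space M. (\<forall>j\<in>J. X j \<omega> = f j) \<and> card {j\<in>D. X j \<omega>} = r}"
    then have "{j\<in>D. X j \<omega>} \<in> SS" "\<omega> \<in> E {j\<in>D. X j \<omega>}"
      using disj unfolding SS_def E_def g_def by auto
    then show "\<omega> \<in> (\<Union>A\<in>SS. E A)" by blast
  next
    fix \<omega> assume "\<omega> \<in> (\<Union>A\<in>SS. E A)"
    then obtain A where A: "A \<in> SS" "\<omega> \<in> E A" by blast
    then have "{j\<in>D. X j \<omega>} = A" unfolding SS_def E_def g_def by auto
    then show "\<omega> \<in> {\<omega>\<in>space M. (\<forall>j\<in>J. X j \<omega> = f j) \<and> card {j\<in>D. X j \<omega>} = r}"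
      using A disj unfolding SS_def E_def g_def by auto
  qed
  have ev: "E A \<in> events" for A
    unfolding E_def using bool_rv_event[OF ind] DI JI finD finJ
    by (intro sets.sets_Collect_finite_All) auto
  have dj: "disjoint_family_on E SS"
    unfolding disjoint_family_on_def
  proof (intro ballI impI)
    fix A B assume "A \<in> SS" "B \<in> SS" "A \<noteq> B"
    then obtain j where "j \<in> D" "(j \<in> A) \<noteq> (j \<in> B)" unfolding SS_def by blast
    then show "E A \<inter> E B = {}" unfolding E_def g_def by auto
  qed
  have pc: "prob {\<omega>\<in>space M. X j \<omega> = False} = 1 - p" if "j \<in> D" for j
  proof -
    have "{\<omega>\<in>space M. X j \<omega> = False} = space M - {\<omega>\<in>space M. X j \<omega> = True}" by auto
    then show ?thesis using prob_compl[OF bool_rv_event[OF ind, of j True]] p[OF that] that DI by auto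
  qed
  have pE: "prob (E A) = p ^ r * (1 - p) ^ (card D - r) * prob {\<omega>\<in>space M. \<forall>j\<in>J. X j \<omega> = f j}"
    if "A \<in> SS" for A
  proof -
    have AD: "A \<subseteq> D" "card A = r" using that unfolding SS_def by auto
    have "prob (E A) = (\<Prod>j\<in>J \<union> D. prob {\<omega>\<in>space M. X j \<omega> = g A j})"
      unfolding E_def using pattern_prob[OF ind] finD finJ DI JI by simp
    also have "\<dots> = (\<Prod>j\<in>J. prob {\<omega>\<in>space M. X j \<omega> = g A j}) * (\<Prod>j\<in>D. prob {\<omega>\<in>space M. X j \<omega> = g A j})"
      using disj finD finJ by (subst prod.union_disjoint) auto
    also have "(\<Prod>j\<in>J. prob {\<omega>\<in>space M. X j \<omega> = g A j}) = prob {\<omega>\<in>space M. \<forall>j\<in>J. X j \<omega> = f j}"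
      using pattern_prob[OF ind finJ JI, of f] disj unfolding g_def by (auto intro!: prod.cong)
    also have "(\<Prod>j\<in>D. prob {\<omega>\<in>space M. X j \<omega> = g A j}) = (\<Prod>j\<in>D. if j \<in> A then p else 1 - p)"
      using p pc unfolding g_def by (intro prod.cong) auto
    also have "\<dots> = p ^ card A * (1 - p) ^ card (D - A)"
      using finD AD by (simp add: prod.If_cases Int_absorb1 Diff_eq[symmetric])
    also have "card (D - A) = card D - r" using AD finD by (simp add: card_Diff_subset finite_subset)
    finally show ?thesis using AD by simp
  qed
  have "prob (\<Union>A\<in>SS. E A) = (\<Sum>A\<in>SS. prob (E A))"
    using finSS ev dj by (intro finite_measure_finite_Union) auto
  also have "\<dots> = (\<Sum>A\<in>SS. p ^ r * (1 - p) ^ (card D - r) * prob {\<omega>\<in>space M. \<forall>j\<in>J. X j \<omega> = f j})"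
    using pE by (rule sum.cong[OF refl])
  also have "\<dots> = real (card D choose r) * p ^ r * (1 - p) ^ (card D - r) * prob {\<omega>\<in>space M. \<forall>j\<in>J. X j \<omega> = f j}"
    using cardSS by simp
  finally show ?thesis using eq by simp
qed

lemma lastm_props:
  assumes "\<exists>s<t. sl i s"
  shows "1 \<le> lastm sl i t \<and> lastm sl i t \<le> t \<and> sl i (t - lastm sl i t)
    \<and> (\<forall>s. t - lastm sl i t < s \<and> s < t \<longrightarrow> \<not> sl i s)"
proof -
  obtain s where s: "s < t" "sl i s" using assms by blast
  let ?P = "\<lambda>l. 1 \<le> l \<and> l \<le> t \<and> sl i (t - l)"
  have "?P (t - s)" using s by auto
  then have P: "?P (lastm sl i t)" unfolding lastm_def by (rule LeastI)
  have "\<not> sl i s'" if "t - lastm sl i t < s'" "s' < t" for s'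
  proof
    assume "sl i s'"
    then have "?P (t - s')" using that by auto
    then have "lastm sl i t \<le> t - s'" unfolding lastm_def by (rule Least_le)
    then show False using that P by linarith
  qed
  then show ?thesis using P by blast
qed

lemma lastm_iff:
  assumes "1 \<le> l" "l \<le> t"
  shows "((\<exists>s<t. sl i s) \<and> lastm sl i t = l) \<longleftrightarrow> (\<forall>s\<in>{t-l..<t}. sl i s = (s = t - l))"
proof
  assume h: "(\<exists>s<t. sl i s) \<and> lastm sl i t = l"
  then have ex: "\<exists>s<t. sl i s" and eq: "lastm sl i t = l" by auto
  note P = lastm_props[of t sl i, OF ex, unfolded eq]
  show "\<forall>s\<in>{t-l..<t}. sl i s = (s = t - l)"
  proof
    fix s assume s: "s \<in> {t-l..<t}"
    show "sl i s = (s = t - l)"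
    proof (cases "s = t - l")
      case True then show ?thesis using P by simp
    next
      case False then have "t - l < s" "s < t" using s by auto
      then show ?thesis using P False by blast
    qed
  qed
next
  assume h: "\<forall>s\<in>{t-l..<t}. sl i s = (s = t - l)"
  then have st: "sl i (t - l)" using assms by auto
  then have ex: "\<exists>s<t. sl i s" using assms by (intro exI[of _ "t - l"]) auto
  let ?P = "\<lambda>l. 1 \<le> l \<and> l \<le> t \<and> sl i (t - l)"
  have "lastm sl i t = l" unfolding lastm_def
  proof (rule Least_equality)
    show "?P l" using assms st by auto
    fix l' assume "?P l'"
    then show "l \<le> l'" using h assms by (cases "l \<le> l'") auto
  qed
  then show "(\<exists>s<t. sl i s) \<and> lastm sl i t = l" using ex by blast
qed

lemma Vn_hold:
  assumes "1 \<le> i" "sl i s" "\<And>s'. s < s' \<Longrightarrow> s' < t \<Longrightarrow> \<not> sl i s'" "Suc s + d \<le> t"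
  shows "Vn g sl u (Suc i) (Suc s + d) = Vn g sl u i s"
  using assms(4)
proof (induction d)
  case 0 then show ?case using assms(1,2) by simp
next
  case (Suc d)
  have "\<not> sl i (Suc s + d)" using assms(3) Suc.prems by simp
  then show ?case using Suc by simp
qed

lemma Vn_last:
  assumes "1 \<le> i" "\<exists>s<t. sl i s"
  shows "Vn g sl u (Suc i) t = Vn g sl u i (t - lastm sl i t)"
proof -
  note P = lastm_props[of t sl i, OF assms(2)]
  let ?s = "t - lastm sl i t"
  have "Vn g sl u (Suc i) (Suc ?s + (t - Suc ?s)) = Vn g sl u i ?s"
    using P assms(1) by (intro Vn_hold[where t=t]) auto
  moreover have "Suc ?s \<le> t" using P by linarith
  then have "Suc ?s + (t - Suc ?s) = t" by (rule le_add_diff_inverse)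
  ultimately show ?thesis by simp
qed

lemma eta_card:
  assumes "k \<le> t"
  shows "eta g t k = int (card {s\<in>{t-k..<t}. g s})"
proof -
  have "{s. s < t \<and> g s} = {s. s < t - k \<and> g s} \<union> {s\<in>{t-k..<t}. g s}" by auto
  moreover have "card ({s. s < t - k \<and> g s} \<union> {s\<in>{t-k..<t}. g s})
     = card {s. s < t - k \<and> g s} + card {s\<in>{t-k..<t}. g s}"
    by (rule card_Un_disjoint) auto
  ultimately show ?thesis unfolding eta_def VS_def by simp
qed

theorem proposition4:
  fixes M :: "'a measure" and pg :: real and \<rho> :: "nat \<Rightarrow> real" and N :: nat
    and G :: "nat \<Rightarrow> 'a \<Rightarrow> bool" and S :: "nat \<Rightarrow> nat \<Rightarrow> 'a \<Rightarrow> bool"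
    and U :: "nat \<Rightarrow> 'a \<Rightarrow> bool"
  assumes "prob_space M"
    and indep: "prob_space.indep_vars M (\<lambda>_. count_space UNIV) (case_sum G (case_prod S)) UNIV"
    and genG: "\<And>t. measure M {\<omega> \<in> space M. G t \<omega>} = pg"
    and linkS: "\<And>i t. measure M {\<omega> \<in> space M. S i t \<omega>} = \<rho> i"
    and i: "1 \<le> i" "i \<le> N"
  shows
    "(\<forall>\<omega>\<in>space M. \<forall>t. (\<exists>s<t. S i s \<omega>) \<longrightarrow>
        Vn (\<lambda>s. G s \<omega>) (\<lambda>j s. S j s \<omega>) (\<lambda>s. U s \<omega>) (Suc i) t
          = Vn (\<lambda>s. G s \<omega>) (\<lambda>j s. S j s \<omega>) (\<lambda>s. U s \<omega>) i (t - lastm (\<lambda>j s. S j s \<omega>) i t)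
      \<and> VAoI (\<lambda>s. G s \<omega>) (\<lambda>j s. S j s \<omega>) (\<lambda>s. U s \<omega>) (Suc i) t
          = VAoI (\<lambda>s. G s \<omega>) (\<lambda>j s. S j s \<omega>) (\<lambda>s. U s \<omega>) i (t - lastm (\<lambda>j s. S j s \<omega>) i t)
            + eta (\<lambda>s. G s \<omega>) t (lastm (\<lambda>j s. S j s \<omega>) i t))
   \<and> (\<forall>t l. 1 \<le> l \<and> l \<le> t \<longrightarrow>
        measure M {\<omega> \<in> space M. (\<exists>s<t. S i s \<omega>) \<and> lastm (\<lambda>j s. S j s \<omega>) i t = l}
          = (1 - \<rho> i) ^ (l - 1) * \<rho> i)
   \<and> (\<forall>t k r. 1 \<le> k \<and> k \<le> t \<and> r \<le> k \<longrightarrow>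
        measure M {\<omega> \<in> space M. (\<exists>s<t. S i s \<omega>) \<and> lastm (\<lambda>j s. S j s \<omega>) i t = k
                      \<and> eta (\<lambda>s. G s \<omega>) t k = int r}
          = real (k choose r) * pg ^ r * (1 - pg) ^ (k - r)
            * measure M {\<omega> \<in> space M. (\<exists>s<t. S i s \<omega>) \<and> lastm (\<lambda>j s. S j s \<omega>) i t = k})
   \<and> (\<forall>t k r. k \<le> t \<and> r \<le> k \<longrightarrow>
        measure M {\<omega> \<in> space M. eta (\<lambda>s. G s \<omega>) t k = int r}
          = real (k choose r) * pg ^ r * (1 - pg) ^ (k - r))"
proof -
  interpret prob_space M by fact
  define X where "X = case_sum G (case_prod S)"
  have ind: "indep_vars (\<lambda>_. count_space UNIV) X UNIV" using indep unfolding X_def .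
  have XS: "X (Inr (j, s)) = S j s" for j s unfolding X_def by simp
  have XG: "X (Inl s) = G s" for s unfolding X_def by simp
  have pS: "prob {\<omega>\<in>space M. S i s \<omega> = b} = (if b then \<rho> i else 1 - \<rho> i)" for s b
  proof (cases b)
    case True then show ?thesis using linkS by simp
  next
    case False
    have "{\<omega>\<in>space M. S i s \<omega> = False} = space M - {\<omega>\<in>space M. X (Inr (i,s)) \<omega> = True}"
      using XS by auto
    then show ?thesis using prob_compl[OF bool_rv_event[OF ind, of "Inr (i,s)" True]] linkS[of i s] False XS
      by simp
  qed
  define J where "J t l = (\<lambda>s. (Inr (i, s) :: nat + nat \<times> nat)) ` {t-l..<t}" for t l :: nat
  define f where "f t l = (\<lambda>j. j = (Inr (i, t - l) :: nat + nat \<times> nat))" for t l :: nat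
  have evJ: "{\<omega> \<in> space M. (\<exists>s<t. S i s \<omega>) \<and> lastm (\<lambda>j s. S j s \<omega>) i t = l}
      = {\<omega>\<in>space M. \<forall>j\<in>J t l. X j \<omega> = f t l j}" if "1 \<le> l" "l \<le> t" for t l
    using lastm_iff[OF that, of "\<lambda>j s. S j s _"] unfolding J_def f_def by (auto simp: XS)
  have pJ: "prob {\<omega>\<in>space M. \<forall>j\<in>J t l. X j \<omega> = f t l j} = (1 - \<rho> i) ^ (l - 1) * \<rho> i"
    if "1 \<le> l" "l \<le> t" for t l
  proof -
    have "prob {\<omega>\<in>space M. \<forall>j\<in>J t l. X j \<omega> = f t l j}
        = (\<Prod>j\<in>J t l. prob {\<omega>\<in>space M. X j \<omega> = f t l j})"
      unfolding J_def by (rule pattern_prob[OF ind]) auto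
    also have "\<dots> = (\<Prod>s\<in>{t-l..<t}. prob {\<omega>\<in>space M. S i s \<omega> = (s = t - l)})"
      unfolding J_def by (subst prod.reindex) (auto simp: inj_on_def XS f_def)
    also have "\<dots> = (\<Prod>s\<in>{t-l..<t}. if s = t - l then \<rho> i else 1 - \<rho> i)"
      using pS by (intro prod.cong) auto
    also have "{t-l..<t} = insert (t - l) {Suc (t-l)..<t}" using that by auto
    also have "(\<Prod>s\<in>insert (t - l) {Suc (t-l)..<t}. if s = t - l then \<rho> i else 1 - \<rho> i)
        = \<rho> i * (\<Prod>s\<in>{Suc (t-l)..<t}. 1 - \<rho> i)"
      by (subst prod.insert) (auto intro!: prod.cong)
    also have "\<dots> = (1 - \<rho> i) ^ (l - 1) * \<rho> i" using that by simp
    finally show ?thesis .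
  qed
  define D where "D t k = (Inl :: nat \<Rightarrow> nat + nat \<times> nat) ` {t-k..<t}" for t k :: nat
  have cardD: "card (D t k) = k" if "k \<le> t" for t k
    unfolding D_def using that by (subst card_image) auto
  have cnt: "card {j\<in>D t k. X j \<omega>} = card {s\<in>{t-k..<t}. G s \<omega>}" for t k \<omega>
  proof -
    have "{j\<in>D t k. X j \<omega>} = Inl ` {s\<in>{t-k..<t}. G s \<omega>}" unfolding D_def by (auto simp: XG)
    then show ?thesis by (simp add: card_image)
  qed
  have pG: "\<And>j. j \<in> D t k \<Longrightarrow> prob {\<omega>\<in>space M. X j \<omega>} = pg" for t k
    unfolding D_def using genG by (auto simp: XG)
  have etaev: "{\<omega> \<in> space M. eta (\<lambda>s. G s \<omega>) t k = int r}
     = {\<omega>\<in>space M. (\<forall>j\<in>J'. X j \<omega> = f' j) \<and> card {j\<in>D t k. X j \<omega>} = r}"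
    if "k \<le> t" "J' = {}" for t k r J' f'
    using that by (auto simp: eta_card cnt)
  show ?thesis
  proof (intro conjI allI impI ballI)
    fix \<omega> t assume "\<omega> \<in> space M" "\<exists>s<t. S i s \<omega>"
    then show "Vn (\<lambda>s. G s \<omega>) (\<lambda>j s. S j s \<omega>) (\<lambda>s. U s \<omega>) (Suc i) t
          = Vn (\<lambda>s. G s \<omega>) (\<lambda>j s. S j s \<omega>) (\<lambda>s. U s \<omega>) i (t - lastm (\<lambda>j s. S j s \<omega>) i t)"
      using i(1) by (intro Vn_last) auto
    then show "VAoI (\<lambda>s. G s \<omega>) (\<lambda>j s. S j s \<omega>) (\<lambda>s. U s \<omega>) (Suc i) t
          = VAoI (\<lambda>s. G s \<omega>) (\<lambda>j s. S j s \<omega>) (\<lambda>s. U s \<omega>) i (t - lastm (\<lambda>j s. S j s \<omega>) i t)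
            + eta (\<lambda>s. G s \<omega>) t (lastm (\<lambda>j s. S j s \<omega>) i t)"
      unfolding VAoI_def eta_def by simp
  next
    fix t l :: nat assume "1 \<le> l \<and> l \<le> t"
    then show "measure M {\<omega> \<in> space M. (\<exists>s<t. S i s \<omega>) \<and> lastm (\<lambda>j s. S j s \<omega>) i t = l}
          = (1 - \<rho> i) ^ (l - 1) * \<rho> i" using evJ pJ by simp
  next
    fix t k r :: nat assume h: "1 \<le> k \<and> k \<le> t \<and> r \<le> k"
    have "{\<omega> \<in> space M. (\<exists>s<t. S i s \<omega>) \<and> lastm (\<lambda>j s. S j s \<omega>) i t = k
                      \<and> eta (\<lambda>s. G s \<omega>) t k = int r}
       = {\<omega>\<in>space M. (\<forall>j\<in>J t k. X j \<omega> = f t k j) \<and> card {j\<in>D t k. X j \<omega>} = r}"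
      using evJ[of k t] h by (auto simp: eta_card cnt)
    moreover have "prob \<dots> = real (card (D t k) choose r) * pg ^ r * (1 - pg) ^ (card (D t k) - r)
        * prob {\<omega>\<in>space M. \<forall>j\<in>J t k. X j \<omega> = f t k j}"
      by (rule count_binomial[OF ind _ _ _ _ _ pG]) (auto simp: D_def J_def)
    ultimately show "measure M {\<omega> \<in> space M. (\<exists>s<t. S i s \<omega>) \<and> lastm (\<lambda>j s. S j s \<omega>) i t = k
                      \<and> eta (\<lambda>s. G s \<omega>) t k = int r}
          = real (k choose r) * pg ^ r * (1 - pg) ^ (k - r)
            * measure M {\<omega> \<in> space M. (\<exists>s<t. S i s \<omega>) \<and> lastm (\<lambda>j s. S j s \<omega>) i t = k}"
      using evJ[of k t] h cardD[of k t] by simp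
  next
    fix t k r :: nat assume h: "k \<le> t \<and> r \<le> k"
    have "prob {\<omega>\<in>space M. (\<forall>j\<in>{}. X j \<omega> = (\<lambda>_. True) j) \<and> card {j\<in>D t k. X j \<omega>} = r}
       = real (card (D t k) choose r) * pg ^ r * (1 - pg) ^ (card (D t k) - r)
        * prob {\<omega>\<in>space M. \<forall>j\<in>{}. X j \<omega> = (\<lambda>_. True) j}"
      by (rule count_binomial[OF ind _ _ _ _ _ pG]) (auto simp: D_def)
    then show "measure M {\<omega> \<in> space M. eta (\<lambda>s. G s \<omega>) t k = int r}
          = real (k choose r) * pg ^ r * (1 - pg) ^ (k - r)"
      using etaev[of k t "{}"] h cardD[of k t] by (simp add: prob_space)
  qed
qed

end
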